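(* Let $z\in\mathcal{M}$, and let $X_z$ be obtained from $\Lambda_z$ by filling in the bounded complementary components, so that $X_z$ is the smallest cell-like set containing $\Lambda_z$. Then $X_z$ is convex if and only if $z=re^{\pi ip/q}$ for coprime integers $p,q$ and real $r$ with $r\ge2^{-1/q}$, in which case $X_z=\Lambda_z$ is a convex polygon.
   Context: For $z\in\mathbb{D}^*=\{0<|z|<1\}$, $f(x)=zx$, $g(x)=z(x-1)+1$, $\Lambda_z$ is the unique nonempty compact subset of $\mathbb{C}$ with $\Lambda_z=f(\Lambda_z)\cup g(\Lambda_z)$, and $\mathcal{M}=\{z\in\mathbb{D}^*:\Lambda_z\text{ connected}\}$. A compact connected set $X\subseteq\mathbb{C}$ is cell-like if $\mathbb{C}\setminus X$ is connected. *)

theory Defs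
  imports "HOL-Analysis.Analysis"
begin

definition fmap :: "complex \<Rightarrow> complex \<Rightarrow> complex" where
  "fmap z x = z * x"

definition gmap :: "complex \<Rightarrow> complex \<Rightarrow> complex" where
  "gmap z x = z * (x - 1) + 1"

definition Lambda :: "complex \<Rightarrow> complex set" where
  "Lambda z = (THE L. compact L \<and> L \<noteq> {} \<and> L = fmap z ` L \<union> gmap z ` L)"

definition Mset :: "complex set" where
  "Mset = {z. 0 < cmod z \<and> cmod z < 1 \<and> connected (Lambda z)}"

definition filled :: "complex set \<Rightarrow> complex set" where
  "filled K = K \<union> \<Union>{C. C \<in> components (- K) \<and> bounded C}"

end

theory Submission
  imports Defs "HOL-Analysis.Analysis"
begin

definition Phi :: "complex \<Rightarrow> complex set \<Rightarrow> complex set" where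
  "Phi z S = fmap z ` S \<union> gmap z ` S"

lemma Lambda_unique_aux:
  assumes z: "0 < cmod z" "cmod z < 1"
    and L1: "compact L1" "L1 \<noteq> {}" "L1 = Phi z L1"
    and L2: "compact L2" "L2 \<noteq> {}" "L2 = Phi z L2"
  shows "L1 \<subseteq> L2"
proof -
  have cont: "continuous_on L1 (\<lambda>x. infdist x L2)"
    by (intro continuous_intros)
  obtain x0 where x0: "x0 \<in> L1" "\<And>x. x \<in> L1 \<Longrightarrow> infdist x L2 \<le> infdist x0 L2"
    using continuous_attains_sup[OF L1(1) L1(2) cont] by auto
  have key: "infdist x L2 \<le> cmod z * infdist y L2" if "x = fmap z y \<or> x = gmap z y" for x y
  proof -
    obtain w where w: "w \<in> L2" "infdist y L2 = dist y w"
      using infdist_attains_inf[OF compact_imp_closed[OF L2(1)] L2(2)] by blast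
    show ?thesis
    proof (cases "x = fmap z y")
      case True
      have "fmap z w \<in> L2" using w L2(3) unfolding Phi_def by blast
      hence "infdist x L2 \<le> dist x (fmap z w)" by (rule infdist_le)
      also have "\<dots> = cmod z * dist y w" using True
        by (simp add: fmap_def dist_norm right_diff_distrib[symmetric] norm_mult)
      finally show ?thesis using w by simp
    next
      case False
      hence xg: "x = gmap z y" using that by blast
      have "gmap z w \<in> L2" using w L2(3) unfolding Phi_def by blast
      hence "infdist x L2 \<le> dist x (gmap z w)" by (rule infdist_le)
      also have "\<dots> = cmod z * dist y w"
      proof -
        have "x - gmap z w = z * (y - w)" using xg by (simp add: gmap_def algebra_simps)
        thus ?thesis by (simp add: dist_norm norm_mult)
      qed
      finally show ?thesis using w by simp
    qed
  qed
  obtain y0 where y0: "y0 \<in> L1" "x0 = fmap z y0 \<or> x0 = gmap z y0"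
    using x0(1) L1(3) unfolding Phi_def by blast
  have "infdist x0 L2 \<le> cmod z * infdist x0 L2"
    using key[OF y0(2)] x0(2)[OF y0(1)] z infdist_nonneg[of y0 L2]
    by (meson mult_left_mono order_trans less_imp_le)
  hence "infdist x0 L2 \<le> 0" using z infdist_nonneg[of x0 L2]
    by (metis mult_le_cancel_right1 mult.commute not_le)
  hence "\<And>x. x \<in> L1 \<Longrightarrow> infdist x L2 = 0"
    using x0(2) infdist_nonneg by (meson antisym order_trans)
  thus ?thesis
    using in_closed_iff_infdist_zero[OF compact_imp_closed[OF L2(1)] L2(2)] by blast
qed

lemma Phi_mono: "S \<subseteq> T \<Longrightarrow> Phi z S \<subseteq> Phi z T"
  unfolding Phi_def by blast

lemma Lambda_exists:
  assumes z: "0 < cmod z" "cmod z < 1"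
  shows "\<exists>L. compact L \<and> L \<noteq> {} \<and> L = Phi z L"
proof -
  define R where "R = 2 / (1 - cmod z)"
  have R0: "R * (1 - cmod z) = 2" using z unfolding R_def by (auto simp: field_simps)
  have R: "R > 0" "cmod z * (R + 1) + 1 \<le> R"
  proof -
    show "R > 0" using z unfolding R_def by simp
    show "cmod z * (R + 1) + 1 \<le> R" using R0 z by (simp add: algebra_simps)
  qed
  define B where "B = cball (0::complex) R"
  have PB: "Phi z B \<subseteq> B"
  proof
    fix x assume "x \<in> Phi z B"
    then obtain y where y: "norm y \<le> R" "x = fmap z y \<or> x = gmap z y"
      unfolding Phi_def B_def by auto
    show "x \<in> B"
    proof (cases "x = fmap z y")
      case True
      have "norm x = cmod z * norm y" by (simp add: True fmap_def norm_mult)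
      also have "\<dots> \<le> 1 * R" using z y by (intro mult_mono) auto
      finally show ?thesis by (simp add: B_def)
    next
      case False
      hence "x = z * (y - 1) + 1" using y by (simp add: gmap_def)
      hence "norm x \<le> cmod z * norm (y - 1) + 1"
        by (metis norm_mult norm_one norm_triangle_ineq)
      also have "\<dots> \<le> cmod z * (R + 1) + 1"
        using z y norm_triangle_ineq4[of y 1] by (intro add_mono mult_left_mono) auto
      finally show ?thesis using R by (simp add: B_def)
    qed
  qed
  define S where "S n = (Phi z ^^ n) B" for n
  have Sdec: "S (Suc n) \<subseteq> S n" for n
  proof (induction n)
    case 0 then show ?case using PB by (simp add: S_def)
  next
    case (Suc n) then show ?case by (simp add: S_def Phi_mono)
  qed
  have Smono: "m \<le> n \<Longrightarrow> S n \<subseteq> S m" for m n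
    using Sdec by (metis lift_Suc_antimono_le)
  have contf: "continuous_on A (fmap z)" for A unfolding fmap_def by (intro continuous_intros)
  have contg: "continuous_on A (gmap z)" for A unfolding gmap_def by (intro continuous_intros)
  have Scomp: "compact (S n) \<and> S n \<noteq> {}" for n
  proof (induction n)
    case 0 then show ?case using R by (simp add: S_def B_def)
  next
    case (Suc n)
    have "S (Suc n) = Phi z (S n)" by (simp add: S_def)
    then show ?case using Suc unfolding Phi_def
      by (auto intro!: compact_Un compact_continuous_image contf contg)
  qed
  define L where "L = \<Inter>(range S)"
  have injf: "inj (fmap z)" using z by (auto simp: inj_def fmap_def)
  have injg: "inj (gmap z)" using z by (auto simp: inj_def gmap_def)
  have "fmap z ` L = (\<Inter>n. fmap z ` S n)" unfolding L_def
    by (rule image_INT[OF inj_on_subset[OF injf]]) auto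
  moreover have "gmap z ` L = (\<Inter>n. gmap z ` S n)" unfolding L_def
    by (rule image_INT[OF inj_on_subset[OF injg]]) auto
  moreover have "(\<Inter>n. fmap z ` S n) \<union> (\<Inter>n. gmap z ` S n) = (\<Inter>n. Phi z (S n))"
  proof
    show "(\<Inter>n. fmap z ` S n) \<union> (\<Inter>n. gmap z ` S n) \<subseteq> (\<Inter>n. Phi z (S n))"
      unfolding Phi_def by blast
    show "(\<Inter>n. Phi z (S n)) \<subseteq> (\<Inter>n. fmap z ` S n) \<union> (\<Inter>n. gmap z ` S n)"
    proof
      fix x assume x: "x \<in> (\<Inter>n. Phi z (S n))"
      show "x \<in> (\<Inter>n. fmap z ` S n) \<union> (\<Inter>n. gmap z ` S n)"
      proof (cases "x \<in> (\<Inter>n. fmap z ` S n)")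
        case False
        then obtain m where m: "x \<notin> fmap z ` S m" by blast
        have "x \<in> gmap z ` S n" for n
        proof -
          have "x \<notin> fmap z ` S (max m n)" using m Smono[of m "max m n"] by auto
          hence "x \<in> gmap z ` S (max m n)" using x unfolding Phi_def by blast
          thus ?thesis using Smono[of n "max m n"] by auto
        qed
        thus ?thesis by blast
      qed blast
    qed
  qed
  moreover have "(\<Inter>n. Phi z (S n)) = L"
  proof -
    have "(\<Inter>n. Phi z (S n)) = (\<Inter>n. S (Suc n))" by (simp add: S_def)
    also have "\<dots> = L" unfolding L_def
    proof
      show "(\<Inter>n. S (Suc n)) \<subseteq> \<Inter> (range S)"
      proof
        fix x assume "x \<in> (\<Inter>n. S (Suc n))"
        hence "x \<in> S n" for n using Sdec[of n] by auto
        thus "x \<in> \<Inter> (range S)" by auto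
      qed
    qed (auto)
    finally show ?thesis .
  qed
  ultimately have Lfix: "L = Phi z L" unfolding Phi_def by simp
  have "compact L" unfolding L_def using Scomp
    by (intro compact_Inter) auto
  moreover have "L \<noteq> {}" unfolding L_def using Scomp Smono
    by (intro compact_nest) auto
  ultimately show ?thesis using Lfix by blast
qed

lemma Lambda_props:
  assumes z: "0 < cmod z" "cmod z < 1"
  shows "compact (Lambda z) \<and> Lambda z \<noteq> {} \<and> Lambda z = fmap z ` Lambda z \<union> gmap z ` Lambda z"
proof -
  have "\<exists>!L. compact L \<and> L \<noteq> {} \<and> L = fmap z ` L \<union> gmap z ` L"
    using Lambda_exists[OF z] Lambda_unique_aux[OF z]
    unfolding Phi_def by (metis subset_antisym)
  thus ?thesis unfolding Lambda_def by (rule theI')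
qed

lemma Lambda_eqI:
  assumes z: "0 < cmod z" "cmod z < 1"
    and L: "compact L" "L \<noteq> {}" "L = fmap z ` L \<union> gmap z ` L"
  shows "Lambda z = L"
  using Lambda_props[OF z] Lambda_unique_aux[OF z] L unfolding Phi_def
  by (metis subset_antisym)


fun Pset :: "complex \<Rightarrow> real \<Rightarrow> real \<Rightarrow> nat \<Rightarrow> complex set" where
  "Pset z al be 0 = {0}"
| "Pset z al be (Suc n) = {v + (1 - z) * z ^ n * of_real t | v t. v \<in> Pset z al be n \<and> al \<le> t \<and> t \<le> be}"

fun Vset :: "complex \<Rightarrow> real \<Rightarrow> real \<Rightarrow> nat \<Rightarrow> complex set" where
  "Vset z al be 0 = {0}"
| "Vset z al be (Suc n) = (\<lambda>v. v + (1 - z) * z ^ n * of_real al) ` Vset z al be n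
      \<union> (\<lambda>v. v + (1 - z) * z ^ n * of_real be) ` Vset z al be n"

lemma Vset_finite: "finite (Vset z al be n)"
  by (induction n) auto

lemma Pset_repr:
  "x \<in> Pset z al be n \<longleftrightarrow>
     (\<exists>t. (\<forall>m<n. al \<le> t m \<and> t m \<le> be) \<and> x = (\<Sum>m<n. (1 - z) * z ^ m * of_real (t m)))"
proof (induction n arbitrary: x)
  case 0 then show ?case by auto
next
  case (Suc n)
  show ?case
  proof
    assume "x \<in> Pset z al be (Suc n)"
    then obtain v s where vs: "v \<in> Pset z al be n" "al \<le> s" "s \<le> be"
      "x = v + (1 - z) * z ^ n * of_real s" by auto
    then obtain t where t: "\<forall>m<n. al \<le> t m \<and> t m \<le> be" "v = (\<Sum>m<n. (1 - z) * z ^ m * of_real (t m))"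
      using Suc.IH by blast
    define t' where "t' = t(n := s)"
    have "(\<Sum>m<n. (1 - z) * z ^ m * of_real (t' m)) = (\<Sum>m<n. (1 - z) * z ^ m * of_real (t m))"
      by (intro sum.cong) (auto simp: t'_def)
    hence "x = (\<Sum>m<Suc n. (1 - z) * z ^ m * of_real (t' m))"
      using vs t by (simp add: t'_def)
    moreover have "\<forall>m<Suc n. al \<le> t' m \<and> t' m \<le> be" using t vs
      by (auto simp: t'_def less_Suc_eq)
    ultimately show "\<exists>t. (\<forall>m<Suc n. al \<le> t m \<and> t m \<le> be) \<and> x = (\<Sum>m<Suc n. (1 - z) * z ^ m * of_real (t m))"
      by blast
  next
    assume "\<exists>t. (\<forall>m<Suc n. al \<le> t m \<and> t m \<le> be) \<and> x = (\<Sum>m<Suc n. (1 - z) * z ^ m * of_real (t m))"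
    then obtain t where t: "\<forall>m<Suc n. al \<le> t m \<and> t m \<le> be" "x = (\<Sum>m<Suc n. (1 - z) * z ^ m * of_real (t m))"
      by blast
    have "\<forall>m<n. al \<le> t m \<and> t m \<le> be" using t(1) by auto
    hence "(\<Sum>m<n. (1 - z) * z ^ m * of_real (t m)) \<in> Pset z al be n"
      using Suc.IH by blast
    moreover have "x = (\<Sum>m<n. (1 - z) * z ^ m * of_real (t m)) + (1 - z) * z ^ n * of_real (t n)"
      using t(2) by simp
    moreover have "al \<le> t n" "t n \<le> be" using t(1) by auto
    ultimately show "x \<in> Pset z al be (Suc n)" unfolding Pset.simps by blast
  qed
qed

lemma Pset_SucI: "v \<in> Pset z al be n \<Longrightarrow> al \<le> t \<Longrightarrow> t \<le> be \<Longrightarrow>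
    v + (1 - z) * z ^ n * of_real t \<in> Pset z al be (Suc n)"
  unfolding Pset.simps by (intro CollectI exI conjI) (rule refl, assumption+)

lemma Pset_SucE: "x \<in> Pset z al be (Suc n) \<Longrightarrow>
   (\<And>v t. v \<in> Pset z al be n \<Longrightarrow> al \<le> t \<Longrightarrow> t \<le> be \<Longrightarrow> x = v + (1 - z) * z ^ n * of_real t \<Longrightarrow> P) \<Longrightarrow> P"
  unfolding Pset.simps by auto

lemma Pset_hull:
  assumes "al < be"
  shows "Pset z al be n = convex hull (Vset z al be n)"
proof (induction n)
  case 0 then show ?case by simp
next
  case (Suc n)
  define a where "a = (1 - z) * z ^ n"
  have VS: "Vset z al be (Suc n) = (+) (a * of_real al) ` Vset z al be n \<union> (+) (a * of_real be) ` Vset z al be n"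
    by (auto simp: a_def add.commute)
  have cvx: "convex (Pset z al be (Suc n))"
  proof (rule convexI)
    fix x y :: complex and u w :: real
    assume x: "x \<in> Pset z al be (Suc n)" and y: "y \<in> Pset z al be (Suc n)"
      and uw: "0 \<le> u" "0 \<le> w" "u + w = 1"
    obtain v1 t1 where h1: "v1 \<in> Pset z al be n" "al \<le> t1" "t1 \<le> be" "x = v1 + a * of_real t1"
      using Pset_SucE[OF x] unfolding a_def by metis
    obtain v2 t2 where h2: "v2 \<in> Pset z al be n" "al \<le> t2" "t2 \<le> be" "y = v2 + a * of_real t2"
      using Pset_SucE[OF y] unfolding a_def by metis
    have "u *\<^sub>R v1 + w *\<^sub>R v2 \<in> convex hull Vset z al be n"
      by (rule convexD[OF convex_convex_hull]) (use h1 h2 uw Suc.IH in auto)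
    hence A: "u *\<^sub>R v1 + w *\<^sub>R v2 \<in> Pset z al be n" using Suc.IH by simp
    have B: "al \<le> u * t1 + w * t2" "u * t1 + w * t2 \<le> be"
      using convexD[OF convex_real_interval(5)[of al be], of t1 t2 u w] h1 h2 uw by auto
    have "u *\<^sub>R x + w *\<^sub>R y = (u *\<^sub>R v1 + w *\<^sub>R v2) + a * of_real (u * t1 + w * t2)"
      using h1 h2 by (simp add: scaleR_conv_of_real algebra_simps)
    thus "u *\<^sub>R x + w *\<^sub>R y \<in> Pset z al be (Suc n)"
      using Pset_SucI[OF A B] unfolding a_def by simp
  qed
  show ?case
  proof
    show "Pset z al be (Suc n) \<subseteq> convex hull Vset z al be (Suc n)"
    proof
      fix x assume x: "x \<in> Pset z al be (Suc n)"
      obtain v t where h0: "v \<in> Pset z al be n" "al \<le> t" "t \<le> be" "x = v + a * of_real t"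
        using Pset_SucE[OF x] unfolding a_def by metis
      have h: "v \<in> convex hull Vset z al be n" using h0(1) Suc.IH by simp
      define l where "l = (t - al) / (be - al)"
      have l: "0 \<le> l" "l \<le> 1" using h0 assms by (auto simp: l_def field_simps)
      have lt: "l * (be - al) = t - al" using assms by (simp add: l_def)
      have t: "t = (1 - l) * al + l * be"
      proof -
        have "(1 - l) * al + l * be = al + l * (be - al)" by (simp add: algebra_simps)
        thus ?thesis using lt by simp
      qed
      have m1: "v + a * of_real al \<in> convex hull Vset z al be (Suc n)"
      proof -
        have "v + a * of_real al \<in> (+) (a * of_real al) ` (convex hull Vset z al be n)"
          using h by (auto simp: add.commute)
        also have "\<dots> = convex hull ((+) (a * of_real al) ` Vset z al be n)"
          by (simp only: convex_hull_translation)
        also have "\<dots> \<subseteq> convex hull Vset z al be (Suc n)"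
          by (rule hull_mono, subst VS, rule Un_upper1)
        finally show ?thesis .
      qed
      have m2: "v + a * of_real be \<in> convex hull Vset z al be (Suc n)"
      proof -
        have "v + a * of_real be \<in> (+) (a * of_real be) ` (convex hull Vset z al be n)"
          using h by (auto simp: add.commute)
        also have "\<dots> = convex hull ((+) (a * of_real be) ` Vset z al be n)"
          by (simp only: convex_hull_translation)
        also have "\<dots> \<subseteq> convex hull Vset z al be (Suc n)"
          by (rule hull_mono, subst VS, rule Un_upper2)
        finally show ?thesis .
      qed
      have "x = (1 - l) *\<^sub>R (v + a * of_real al) + l *\<^sub>R (v + a * of_real be)"
        using h0 t by (simp add: scaleR_conv_of_real algebra_simps)
      thus "x \<in> convex hull Vset z al be (Suc n)"
        using convexD[OF convex_convex_hull m1 m2, of "1 - l" l] l by simp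
    qed
  next
    have "Vset z al be (Suc n) \<subseteq> Pset z al be (Suc n)"
    proof
      fix x assume "x \<in> Vset z al be (Suc n)"
      then obtain v where v: "v \<in> Vset z al be n" "x = v + a * of_real al \<or> x = v + a * of_real be"
        by (auto simp: a_def)
      have vP: "v \<in> Pset z al be n" using hull_inc[OF v(1), of convex] Suc.IH by simp
      show "x \<in> Pset z al be (Suc n)"
        using v(2) Pset_SucI[OF vP, of al] Pset_SucI[OF vP, of be] assms unfolding a_def by auto
    qed
    from this cvx show "convex hull Vset z al be (Suc n) \<subseteq> Pset z al be (Suc n)"
      by (rule hull_minimal)
  qed
qed


declare Pset.simps(2)[simp del]

lemma shift_identity:
  fixes z :: complex and w e :: real
  assumes zw: "z ^ Suc n = of_real w"
  shows "(\<Sum>m<Suc n. (1 - z) * z ^ m * of_real ((\<lambda>m. if m = 0 then w * t' n + e else t' (m - 1)) m))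
       = z * (\<Sum>m<Suc n. (1 - z) * z ^ m * of_real (t' m)) + (1 - z) * of_real e"
proof -
  define F where "F = (\<lambda>m. (1 - z) * z ^ m * of_real ((\<lambda>m. if m = 0 then w * t' n + e else t' (m - 1)) m))"
  have 1: "sum F {..<Suc n} = F 0 + (\<Sum>m<n. F (Suc m))" by (rule sum.lessThan_Suc_shift)
  have 2: "F 0 = (1 - z) * of_real (w * t' n + e)" by (simp add: F_def)
  have 3: "(\<Sum>m<n. F (Suc m)) = (\<Sum>m<n. (1 - z) * z ^ Suc m * of_real (t' m))" by (simp add: F_def)
  have "(\<Sum>m<Suc n. (1 - z) * z ^ m * of_real ((\<lambda>m. if m = 0 then w * t' n + e else t' (m - 1)) m))
      = (1 - z) * of_real (w * t' n + e) + (\<Sum>m<n. (1 - z) * z ^ Suc m * of_real (t' m))"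
    using 1 2 3 unfolding F_def by (simp only:)
  moreover have "z * (\<Sum>m<Suc n. (1 - z) * z ^ m * of_real (t' m))
      = (\<Sum>m<n. (1 - z) * z ^ Suc m * of_real (t' m)) + (1 - z) * z ^ Suc n * of_real (t' n)"
    by (simp add: sum_distrib_left algebra_simps)
  ultimately show ?thesis using zw by (simp only:) (simp add: algebra_simps)
qed

lemma Pset_fix:
  fixes z :: complex and w al be :: real
  assumes zw: "z ^ Suc n = of_real w"
    and I: "\<And>x. (al \<le> x \<and> x \<le> be) \<longleftrightarrow> (\<exists>y. al \<le> y \<and> y \<le> be \<and> (x = w * y \<or> x = w * y + 1))"
  shows "Pset z al be (Suc n) = fmap z ` Pset z al be (Suc n) \<union> gmap z ` Pset z al be (Suc n)"
    (is "?P = _")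
proof
  show "?P \<subseteq> fmap z ` ?P \<union> gmap z ` ?P"
  proof
    fix x assume "x \<in> ?P"
    then obtain t where t: "\<forall>m<Suc n. al \<le> t m \<and> t m \<le> be" "x = (\<Sum>m<Suc n. (1 - z) * z ^ m * of_real (t m))"
      using Pset_repr by blast
    obtain s where s: "al \<le> s" "s \<le> be" "t 0 = w * s \<or> t 0 = w * s + 1"
      using I[of "t 0"] t(1) by auto
    define e :: real where "e = (if t 0 = w * s then 0 else 1)"
    have e: "t 0 = w * s + e" using s(3) by (auto simp: e_def)
    define t' where "t' = (\<lambda>m. if m < n then t (Suc m) else s)"
    have t'I: "\<forall>m<Suc n. al \<le> t' m \<and> t' m \<le> be" using t(1) s by (auto simp: t'_def)
    have "x = (\<Sum>m<Suc n. (1 - z) * z ^ m * of_real ((\<lambda>m. if m = 0 then w * t' n + e else t' (m - 1)) m))"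
      unfolding t(2) by (intro sum.cong refl) (auto simp: t'_def e gr0_conv_Suc)
    also have "\<dots> = z * (\<Sum>m<Suc n. (1 - z) * z ^ m * of_real (t' m)) + (1 - z) * of_real e"
      by (rule shift_identity[OF zw])
    finally have xe: "x = z * (\<Sum>m<Suc n. (1 - z) * z ^ m * of_real (t' m)) + (1 - z) * of_real e" .
    have yP: "(\<Sum>m<Suc n. (1 - z) * z ^ m * of_real (t' m)) \<in> ?P"
      using Pset_repr t'I by blast
    show "x \<in> fmap z ` ?P \<union> gmap z ` ?P"
    proof (cases "e = 0")
      case True
      thus ?thesis using xe yP by (auto simp: fmap_def)
    next
      case False
      hence "e = 1" by (auto simp: e_def split: if_splits)
      hence "x = gmap z (\<Sum>m<Suc n. (1 - z) * z ^ m * of_real (t' m))"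
        using xe by (simp add: gmap_def algebra_simps)
      thus ?thesis using yP by blast
    qed
  qed
next
  show "fmap z ` ?P \<union> gmap z ` ?P \<subseteq> ?P"
  proof
    fix x assume "x \<in> fmap z ` ?P \<union> gmap z ` ?P"
    then obtain y and e :: real where ye: "y \<in> ?P" "e = 0 \<or> e = 1" "x = z * y + (1 - z) * of_real e"
    proof
      assume "x \<in> fmap z ` ?P"
      then obtain y where "y \<in> ?P" "x = z * y" by (auto simp: fmap_def)
      thus ?thesis using that[of y 0] by simp
    next
      assume "x \<in> gmap z ` ?P"
      then obtain y where "y \<in> ?P" "x = z * y + (1 - z)" by (auto simp: gmap_def algebra_simps)
      thus ?thesis using that[of y 1] by simp
    qed
    then obtain t' where t': "\<forall>m<Suc n. al \<le> t' m \<and> t' m \<le> be" "y = (\<Sum>m<Suc n. (1 - z) * z ^ m * of_real (t' m))"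
      using Pset_repr by blast
    define t where "t = (\<lambda>m. if m = 0 then w * t' n + e else t' (m - 1))"
    have "al \<le> t 0 \<and> t 0 \<le> be" using I[of "t 0"] t'(1) ye(2) by (auto simp: t_def)
    hence tI: "\<forall>m<Suc n. al \<le> t m \<and> t m \<le> be" using t'(1) by (auto simp: t_def)
    have "x = (\<Sum>m<Suc n. (1 - z) * z ^ m * of_real (t m))"
      unfolding t_def shift_identity[OF zw] using ye t' by simp
    thus "x \<in> ?P" using Pset_repr tI by blast
  qed
qed


lemma interval_pos:
  fixes w :: real assumes w: "1/2 \<le> w" "w < 1"
  shows "(0 \<le> x \<and> x \<le> 1/(1-w)) \<longleftrightarrow> (\<exists>y. 0 \<le> y \<and> y \<le> 1/(1-w) \<and> (x = w*y \<or> x = w*y+1))"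
proof -
  define b where "b = 1/(1-w)"
  have b: "b * (1 - w) = 1" "b > 0" using w by (auto simp: b_def)
  have wb: "w * b = b - 1" using b by (simp add: algebra_simps)
  have wb1: "w * b \<ge> 1"
  proof -
    have "b \<ge> 2" using w b(1) by (simp add: b_def field_simps)
    thus ?thesis using wb by simp
  qed
  show ?thesis unfolding b_def[symmetric]
  proof
    assume x: "0 \<le> x \<and> x \<le> b"
    show "\<exists>y. 0 \<le> y \<and> y \<le> b \<and> (x = w*y \<or> x = w*y+1)"
    proof (cases "x \<le> w * b")
      case True
      have "x / w \<le> b" using True w by (simp add: divide_le_eq mult.commute)
      moreover have "0 \<le> x / w" using x w by simp
      ultimately show ?thesis using w by (intro exI[of _ "x / w"]) auto
    next
      case False
      have "(x - 1) / w \<le> b" using x w wb by (simp add: divide_le_eq mult.commute)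
      moreover have "0 \<le> (x - 1) / w" using False wb1 w by simp
      ultimately show ?thesis using w by (intro exI[of _ "(x - 1) / w"]) auto
    qed
  next
    assume "\<exists>y. 0 \<le> y \<and> y \<le> b \<and> (x = w*y \<or> x = w*y+1)"
    then obtain y where y: "0 \<le> y" "y \<le> b" "x = w*y \<or> x = w*y+1" by blast
    have "w * y \<le> w * b" using y w by (intro mult_left_mono) auto
    moreover have "0 \<le> w * y" using y w by simp
    ultimately show "0 \<le> x \<and> x \<le> b" using y(3) wb by (elim disjE) linarith+
  qed
qed

lemma interval_neg:
  fixes w :: real assumes w: "w \<le> -1/2" "-1 < w"
  shows "(w/(1-w^2) \<le> x \<and> x \<le> 1/(1-w^2)) \<longleftrightarrow>
     (\<exists>y. w/(1-w^2) \<le> y \<and> y \<le> 1/(1-w^2) \<and> (x = w*y \<or> x = w*y+1))"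
proof -
  define a where "a = w/(1-w^2)"
  define b where "b = 1/(1-w^2)"
  have d: "1 - w^2 > 0" using w abs_square_less_1[of w] by simp
  have wb: "w * b = a" by (simp add: a_def b_def)
  have wa: "w * a + 1 = b" using d by (simp add: a_def b_def field_simps power2_eq_square)
  have ov: "a + 1 \<le> w * a"
  proof -
    have f: "1 - w^2 = (1 - w) * (1 + w)" by (simp add: power2_eq_square algebra_simps)
    have "1 + w \<noteq> 0" "1 - w \<noteq> 0" using w by auto
    have aa: "a = w / ((1 - w) * (1 + w))" using f a_def by simp
    have m1: "(w - 1) / (1 - w) = -1" using \<open>1 - w \<noteq> 0\<close> by (simp add: divide_eq_minus_1_iff)
    have "(w - 1) * a = ((w - 1) / (1 - w)) * (w / (1 + w))" unfolding aa by simp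
    hence "(w - 1) * a = - w / (1 + w)" using m1 by simp
    moreover have "- w / (1 + w) \<ge> 1"
    proof -
      have p: "1 + w > 0" using w by simp
      have "1 * (1 + w) \<le> - w" using w by simp
      thus ?thesis using p by (subst le_divide_eq) simp
    qed
    ultimately show ?thesis by (simp add: algebra_simps)
  qed
  show ?thesis unfolding a_def[symmetric] b_def[symmetric]
  proof
    assume x: "a \<le> x \<and> x \<le> b"
    show "\<exists>y. a \<le> y \<and> y \<le> b \<and> (x = w*y \<or> x = w*y+1)"
    proof (cases "x \<le> w * a")
      case True
      have wn: "w < 0" using w by simp
      have "a \<le> x / w" using True wn by (subst neg_le_divide_eq) (auto simp: mult.commute)
      moreover have "x / w \<le> b" using x wb wn by (subst neg_divide_le_eq) (auto simp: mult.commute)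
      ultimately show ?thesis using w by (intro exI[of _ "x / w"]) auto
    next
      case False
      have wn: "w < 0" using w by simp
      have "a \<le> (x - 1) / w" using x wa wn by (subst neg_le_divide_eq) (auto simp: mult.commute)
      moreover have "(x - 1) / w \<le> b" using False ov wb wn by (subst neg_divide_le_eq) (auto simp: mult.commute)
      ultimately show ?thesis using w by (intro exI[of _ "(x - 1) / w"]) auto
    qed
  next
    assume "\<exists>y. a \<le> y \<and> y \<le> b \<and> (x = w*y \<or> x = w*y+1)"
    then obtain y where y: "a \<le> y" "y \<le> b" "x = w*y \<or> x = w*y+1" by blast
    have "w * b \<le> w * y" using y w by (intro mult_left_mono_neg) auto
    moreover have "w * y \<le> w * a" using y w by (intro mult_left_mono_neg) auto
    ultimately show "a \<le> x \<and> x \<le> b" using y(3) wb wa ov by (elim disjE) linarith+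
  qed
qed

lemma interval_attractor:
  fixes w :: real assumes "1/2 \<le> \<bar>w\<bar>" "\<bar>w\<bar> < 1"
  obtains al be where "al < be"
    "\<And>x. (al \<le> x \<and> x \<le> be) \<longleftrightarrow> (\<exists>y. al \<le> y \<and> y \<le> be \<and> (x = w*y \<or> x = w*y+1))"
proof (cases "w > 0")
  case True
  hence w: "1/2 \<le> w" "w < 1" using assms by auto
  have "0 < 1/(1-w)" using w by simp
  thus ?thesis using that[OF _ interval_pos[OF w]] by blast
next
  case False
  hence w: "w \<le> -1/2" "-1 < w" using assms by auto
  have d: "1 - w^2 > 0" using w abs_square_less_1[of w] by simp
  have "w/(1-w^2) < 1/(1-w^2)" using d w by (simp add: divide_strict_right_mono)
  thus ?thesis using that[OF _ interval_neg[OF w]] by blast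
qed


lemma filled_inside: "filled K = K \<union> inside K"
proof -
  have "\<Union>{C. C \<in> components (- K) \<and> bounded C} = inside K"
  proof
    show "\<Union>{C. C \<in> components (- K) \<and> bounded C} \<subseteq> inside K"
    proof
      fix y assume "y \<in> \<Union>{C. C \<in> components (- K) \<and> bounded C}"
      then obtain C where C: "C \<in> components (- K)" "bounded C" "y \<in> C" by blast
      then obtain x where x: "x \<in> - K" "C = connected_component_set (- K) x"
        by (auto simp: components_iff)
      have "connected_component_set (- K) y = C"
        using C x by (metis connected_component_eq mem_Collect_eq)
      moreover have "y \<notin> K" using C in_components_subset by blast
      ultimately show "y \<in> inside K" using C by (simp add: inside_def)
    qed
    show "inside K \<subseteq> \<Union>{C. C \<in> components (- K) \<and> bounded C}"
    proof
      fix y assume "y \<in> inside K"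
      hence y: "y \<notin> K" "bounded (connected_component_set (- K) y)" by (auto simp: inside_def)
      have "connected_component_set (- K) y \<in> components (- K)"
        using y by (auto simp: components_iff)
      moreover have "y \<in> connected_component_set (- K) y" using y by simp
      ultimately show "y \<in> \<Union>{C. C \<in> components (- K) \<and> bounded C}" using y by blast
    qed
  qed
  thus ?thesis by (simp add: filled_def)
qed

lemma filled_convex: "convex K \<Longrightarrow> filled K = K"
  by (simp add: filled_inside inside_convex)


definition face :: "complex set \<Rightarrow> complex \<Rightarrow> complex set" where
  "face K u = {x\<in>K. \<forall>y\<in>K. Re (y * cnj u) \<le> Re (x * cnj u)}"

lemma re_add_real: "Re (A + of_real k * B) = Re A + k * Re B"
  by simp

lemma shift_sum:
  fixes r A D :: real
  shows "r * (A * (\<Sum>k<N. r^k * g (Suc k)) + r^N * D) + A * g 0 = A * (\<Sum>k<Suc N. r^k * g k) + r^Suc N * D"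
  unfolding sum.lessThan_Suc_shift by (simp add: sum_distrib_left algebra_simps)

lemma re_rot:
  assumes "z = of_real r * om" "cmod om = 1"
  shows "Re (z * a * cnj v) = r * Re (a * cnj (v * cnj om))"
proof -
  have "cnj om * om = 1" using assms(2) by (simp add: complex_norm_square[symmetric] mult.commute)
  hence "cnj (v * cnj om) = cnj v * om" by simp
  thus ?thesis using assms(1) by (simp add: algebra_simps)
qed

lemma face_decomp:
  assumes r: "z = of_real r * om" "r > 0" "cmod om = 1"
    and C: "C = fmap z ` C \<union> gmap z ` C"
    and x: "x \<in> face C v"
  shows "\<exists>a s. a \<in> face C (v * cnj om) \<and> (s = 0 \<or> s = 1) \<and> x = z * a + of_real s * (1 - z) \<and>
     (Re ((1 - z) * cnj v) > 0 \<longrightarrow> s = 1) \<and> (Re ((1 - z) * cnj v) < 0 \<longrightarrow> s = 0)"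
proof -
  have xC: "x \<in> C" and xm: "\<And>y. y \<in> C \<Longrightarrow> Re (y * cnj v) \<le> Re (x * cnj v)"
    using x by (auto simp: face_def)
  have fC: "z * a \<in> C" if "a \<in> C" for a using that C by (auto simp: fmap_def)
  have gC: "z * a + (1 - z) \<in> C" if "a \<in> C" for a
  proof -
    have "gmap z a \<in> C" using that C by blast
    thus ?thesis by (simp add: gmap_def algebra_simps)
  qed
  obtain a s where as: "a \<in> C" "s = 0 \<or> s = (1::real)" "x = z * a + of_real s * (1 - z)"
  proof -
    have "x \<in> fmap z ` C \<union> gmap z ` C" using xC C by blast
    thus ?thesis
    proof
      assume "x \<in> fmap z ` C"
      then obtain a where "a \<in> C" "x = z * a" by (auto simp: fmap_def)
      thus ?thesis using that[of a 0] by simp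
    next
      assume "x \<in> gmap z ` C"
      then obtain a where "a \<in> C" "x = z * a + (1 - z)" by (auto simp: gmap_def algebra_simps)
      thus ?thesis using that[of a 1] by simp
    qed
  qed
  have mC: "z * a' + of_real s * (1 - z) \<in> C" if "a' \<in> C" for a'
    using as(2) fC[OF that] gC[OF that] by auto
  have "a \<in> face C (v * cnj om)"
    unfolding face_def
  proof (intro CollectI conjI ballI)
    show "a \<in> C" by fact
    fix a' assume a': "a' \<in> C"
    have "Re ((z * a' + of_real s * (1 - z)) * cnj v) \<le> Re (x * cnj v)" by (rule xm[OF mC[OF a']])
    hence "Re (z * a' * cnj v) \<le> Re (z * a * cnj v)" using as(3) by (simp add: algebra_simps)
    thus "Re (a' * cnj (v * cnj om)) \<le> Re (a * cnj (v * cnj om))"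
      using re_rot[OF r(1) r(3)] r(2) by (simp add: mult_le_cancel_left_pos)
  qed
  moreover have "Re ((1 - z) * cnj v) > 0 \<longrightarrow> s = 1"
  proof
    assume pos: "Re ((1 - z) * cnj v) > 0"
    have "Re ((z * a + (1 - z)) * cnj v) \<le> Re (x * cnj v)" by (rule xm[OF gC[OF as(1)]])
    hence "Re ((1 - z) * cnj v) \<le> s * Re ((1 - z) * cnj v)" using as(3) by (simp add: algebra_simps)
    thus "s = 1" using as(2) pos by auto
  qed
  moreover have "Re ((1 - z) * cnj v) < 0 \<longrightarrow> s = 0"
  proof
    assume neg: "Re ((1 - z) * cnj v) < 0"
    have "Re ((z * a) * cnj v) \<le> Re (x * cnj v)" by (rule xm[OF fC[OF as(1)]])
    hence "0 \<le> s * Re ((1 - z) * cnj v)" using as(3) by (simp add: algebra_simps)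
    thus "s = 0" using as(2) neg by auto
  qed
  ultimately show ?thesis using as by blast
qed

lemma face_bound:
  assumes r: "z = of_real r * om" "r > 0" "cmod om = 1"
    and C: "C = fmap z ` C \<union> gmap z ` C"
    and D: "\<forall>x\<in>C. \<forall>y\<in>C. cmod (x - y) \<le> D"
  shows "cmod v = 1 \<Longrightarrow> x \<in> face C v \<Longrightarrow> y \<in> face C v \<Longrightarrow>
    Re ((x - y) * cnj (\<i> * v)) \<le>
      cmod (1 - z) * (\<Sum>k<N. r ^ k * (if Re ((1 - z) * om ^ k * cnj v) = 0 then 1 else 0)) + r ^ N * D"
proof (induction N arbitrary: v x y)
  case 0
  have "x \<in> C" "y \<in> C" using 0 by (auto simp: face_def)
  hence "cmod (x - y) \<le> D" using D by blast
  moreover have "Re ((x - y) * cnj (\<i> * v)) \<le> cmod ((x - y) * cnj (\<i> * v))" by (rule complex_Re_le_cmod)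
  moreover have "cmod ((x - y) * cnj (\<i> * v)) = cmod (x - y)" using 0 by (simp add: norm_mult)
  ultimately show ?case by simp
next
  case (Suc N)
  define c where "c = 1 - z"
  define v' where "v' = v * cnj om"
  have v': "cmod v' = 1" using Suc.prems r(3) by (simp add: v'_def norm_mult)
  obtain a s where a: "a \<in> face C v'" "s = 0 \<or> s = 1" "x = z * a + of_real s * c"
     "Re (c * cnj v) > 0 \<longrightarrow> s = 1" "Re (c * cnj v) < 0 \<longrightarrow> s = 0"
    using face_decomp[OF r C Suc.prems(2)] unfolding v'_def c_def by blast
  obtain b t where b: "b \<in> face C v'" "t = 0 \<or> t = 1" "y = z * b + of_real t * c"
     "Re (c * cnj v) > 0 \<longrightarrow> t = 1" "Re (c * cnj v) < 0 \<longrightarrow> t = 0"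
    using face_decomp[OF r C Suc.prems(3)] unfolding v'_def c_def by blast
  have IH: "Re ((a - b) * cnj (\<i> * v')) \<le>
      cmod c * (\<Sum>k<N. r ^ k * (if Re (c * om ^ k * cnj v') = 0 then 1 else 0)) + r ^ N * D"
    using Suc.IH[OF v' a(1) b(1)] by (simp add: c_def)
  have split: "Re ((x - y) * cnj (\<i> * v)) = r * Re ((a - b) * cnj (\<i> * v')) + (s - t) * Re (c * cnj (\<i> * v))"
  proof -
    have 1: "Re (z * (a - b) * cnj (\<i> * v)) = r * Re ((a - b) * cnj (\<i> * v * cnj om))"
      by (rule re_rot[OF r(1) r(3)])
    have "(x - y) * cnj (\<i> * v) = z * (a - b) * cnj (\<i> * v) + of_real (s - t) * (c * cnj (\<i> * v))"
      using a(3) b(3) by (simp add: algebra_simps)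
    hence 2: "Re ((x - y) * cnj (\<i> * v)) = Re (z * (a - b) * cnj (\<i> * v)) + (s - t) * Re (c * cnj (\<i> * v))"
      by (simp only: re_add_real)
    have 3: "\<i> * v * cnj om = \<i> * v'" by (simp add: v'_def mult.assoc)
    show ?thesis using 1 2 unfolding 3 by simp
  qed
  have term2: "(s - t) * Re (c * cnj (\<i> * v)) \<le> cmod c * (if Re (c * cnj v) = 0 then 1 else 0)"
  proof (cases "Re (c * cnj v) = 0")
    case True
    have "(s - t) * Re (c * cnj (\<i> * v)) \<le> \<bar>s - t\<bar> * \<bar>Re (c * cnj (\<i> * v))\<bar>"
      by (metis abs_ge_self abs_mult)
    also have "\<dots> \<le> 1 * cmod c"
    proof (rule mult_mono)
      show "\<bar>s - t\<bar> \<le> 1" using a(2) b(2) by auto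
      have "\<bar>Re (c * cnj (\<i> * v))\<bar> \<le> cmod (c * cnj (\<i> * v))" by (rule abs_Re_le_cmod)
      thus "\<bar>Re (c * cnj (\<i> * v))\<bar> \<le> cmod c" using Suc.prems(1) by (simp add: norm_mult)
    qed auto
    finally show ?thesis using True by simp
  next
    case False
    hence "s = t" using a(4,5) b(4,5) by (cases "Re (c * cnj v) > 0") auto
    thus ?thesis by simp
  qed
  have rewr: "c * om ^ k * cnj v' = c * om ^ Suc k * cnj v" for k
  proof -
    have "cnj om * om = 1" using r(3) by (simp add: complex_norm_square[symmetric] mult.commute)
    thus ?thesis by (simp add: v'_def algebra_simps)
  qed
  have "Re ((x - y) * cnj (\<i> * v)) \<le>
      r * (cmod c * (\<Sum>k<N. r ^ k * (if Re (c * om ^ Suc k * cnj v) = 0 then 1 else 0)) + r ^ N * D)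
      + cmod c * (if Re (c * cnj v) = 0 then 1 else 0)"
    using split term2 IH r(2) unfolding rewr by (smt (verit) mult_left_mono)
  also have "\<dots> = cmod c * (\<Sum>k<Suc N. r ^ k * (if Re (c * om ^ k * cnj v) = 0 then 1 else 0)) + r ^ Suc N * D"
    using shift_sum[where r=r and A="cmod c" and N=N and g="\<lambda>k. if Re (c * om ^ k * cnj v) = 0 then 1 else 0" and D=D] by simp
  finally show ?case by (simp add: c_def)
qed


lemma chord:
  fixes K :: "complex set" and c :: complex
  assumes K: "compact K" "K \<noteq> {}" and c: "c \<noteq> 0"
    and C: "convex (K \<union> (+) c ` K)"
  defines "e \<equiv> c / of_real (cmod c)"
  defines "n \<equiv> - \<i> * e"
  shows "\<exists>x\<in>face K n. \<exists>y\<in>face K n. Re ((x - y) * cnj e) \<ge> cmod c"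
proof -
  have cc: "c * cnj c = of_real (cmod c ^ 2)" by (rule complex_norm_square[symmetric])
  have ce0: "c * cnj e = of_real (cmod c)"
  proof -
    have "c * cnj e = c * cnj c / of_real (cmod c)" by (simp add: e_def)
    also have "\<dots> = of_real (cmod c)" using c unfolding cc by (simp add: power2_eq_square)
    finally show ?thesis .
  qed
  have ce: "Re (c * cnj e) = cmod c" using ce0 by simp
  have cn: "Re (c * cnj n) = 0"
  proof -
    have "c * cnj n = \<i> * (c * cnj e)" by (simp add: n_def)
    moreover note ce0
    ultimately show ?thesis by simp
  qed
  have cont: "continuous_on S (\<lambda>x. Re (x * cnj u))" for S u by (intro continuous_intros)
  obtain x0 where x0: "x0 \<in> K" "\<And>y. y \<in> K \<Longrightarrow> Re (y * cnj n) \<le> Re (x0 * cnj n)"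
    using continuous_attains_sup[OF K cont] by blast
  define M where "M = Re (x0 * cnj n)"
  have F: "face K n = K \<inter> {x. M \<le> Re (x * cnj n)}"
    using x0 unfolding face_def M_def by (auto intro: order_trans)
  have FM: "x \<in> face K n \<Longrightarrow> Re (x * cnj n) = M" for x
    using x0 unfolding face_def M_def by (auto intro: antisym)
  have cF: "compact (face K n)" unfolding F
    by (intro compact_Int_closed K closed_Collect_le continuous_intros)
  have nF: "face K n \<noteq> {}" using x0 unfolding F M_def by auto
  obtain xm where xm: "xm \<in> face K n" "\<And>y. y \<in> face K n \<Longrightarrow> Re (y * cnj e) \<le> Re (xm * cnj e)"
    using continuous_attains_sup[OF cF nF cont] by blast
  obtain ym where ym: "ym \<in> face K n" "\<And>y. y \<in> face K n \<Longrightarrow> Re (ym * cnj e) \<le> Re (y * cnj e)"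
    using continuous_attains_inf[OF cF nF cont] by blast
  have "Re ((xm - ym) * cnj e) \<ge> cmod c"
  proof (rule ccontr)
    assume neg: "\<not> Re ((xm - ym) * cnj e) \<ge> cmod c"
    define p where "p = (1/2) *\<^sub>R xm + (1/2) *\<^sub>R (c + ym)"
    have xK: "xm \<in> K" and yK: "ym \<in> K" using xm ym by (auto simp: face_def)
    have "p \<in> K \<union> (+) c ` K"
      unfolding p_def by (rule convexD[OF C]) (use xK yK in auto)
    have pn: "Re (p * cnj n) = M"
      using FM[OF xm(1)] FM[OF ym(1)] cn by (simp add: p_def scaleR_conv_of_real algebra_simps)
    have pe: "Re (p * cnj e) = (Re (xm * cnj e) + Re (ym * cnj e) + cmod c) / 2"
      using ce by (simp add: p_def scaleR_conv_of_real algebra_simps) (simp add: field_simps)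
    show False
    proof (cases "p \<in> K")
      case True
      have "p \<in> face K n" using True pn x0 unfolding face_def M_def by auto
      hence "Re (p * cnj e) \<le> Re (xm * cnj e)" by (rule xm(2))
      thus False using pe neg by (simp add: algebra_simps)
    next
      case False
      then obtain k where k: "k \<in> K" "p = c + k" using \<open>p \<in> K \<union> (+) c ` K\<close> by auto
      have "Re (k * cnj n) = M" using pn cn k(2) by (simp add: algebra_simps)
      hence "k \<in> face K n" using k(1) x0 unfolding face_def M_def by auto
      hence "Re (ym * cnj e) \<le> Re (k * cnj e)" by (rule ym(2))
      moreover have "Re (k * cnj e) = Re (p * cnj e) - cmod c" using k(2) ce by (simp add: algebra_simps)
      ultimately show False using pe neg by (simp add: algebra_simps)
    qed
  qed
  thus ?thesis using xm(1) ym(1) by blast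
qed


lemma Vset_nonempty: "Vset z al be n \<noteq> {}"
  by (induction n) auto

lemma reverse_dir:
  fixes z :: complex and p q :: int and r :: real
  assumes z: "0 < cmod z" "cmod z < 1" and q: "q > 0" and r: "r \<ge> 2 powr (- 1 / real_of_int q)"
    and zr: "z = complex_of_real r * exp (complex_of_real pi * \<i> * of_int p / of_int q)"
  shows "convex (filled (Lambda z)) \<and> filled (Lambda z) = Lambda z \<and> polytope (Lambda z)"
proof -
  have r0: "r > 0" using r by (smt (verit) powr_gt_zero)
  have arg: "complex_of_real pi * \<i> * of_int p / of_int q = \<i> * of_real (pi * p / q)"
    by simp
  have "cmod z = r" using r0 unfolding zr arg by (simp add: norm_mult)
  hence r1: "r < 1" using z by simp
  obtain n where n: "q = int (Suc n)" using q by (metis gr0_implies_Suc pos_int_cases of_nat_0_less_iff)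
  have "exp (\<i> * of_real (pi * p / q)) ^ Suc n = exp (of_nat (Suc n) * (\<i> * of_real (pi * p / q)))"
    by (rule exp_of_nat_mult[symmetric])
  also have "of_nat (Suc n) * (\<i> * of_real (pi * p / q)) = \<i> * of_real (pi * p)"
  proof -
    have "real (Suc n) * (pi * p / q) = pi * p" using n by simp
    moreover have gen: "\<And>m (x::real). of_nat m * (\<i> * of_real x) = \<i> * of_real (real m * x)"
      by simp
    ultimately show ?thesis by (simp only: gen)
  qed
  also have "exp (\<i> * of_real (pi * p)) = of_real (cos (pi * p))"
    using cis_conv_exp[of "pi * p", symmetric] by (simp add: cis.ctr Complex_eq)
  finally have ep: "exp (\<i> * of_real (pi * p / q)) ^ Suc n = of_real (cos (pi * p))" .
  define w where "w = r ^ Suc n * cos (pi * p)"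
  have zw: "z ^ Suc n = of_real w"
    unfolding zr arg w_def power_mult_distrib ep by simp
  have c1: "\<bar>cos (pi * p)\<bar> = 1"
  proof -
    have "(cos (pi * p))^2 = 1" using sin_cos_squared_add[of "pi * p"] by simp
    thus ?thesis by (simp add: power2_eq_1_iff abs_if)
  qed
  have aw: "\<bar>w\<bar> = r ^ Suc n" using r0 c1 by (simp add: w_def abs_mult)
  have half: "1/2 \<le> r ^ Suc n"
  proof -
    have "(2 powr (- 1 / real_of_int q)) powr (real (Suc n)) \<le> r powr (real (Suc n))"
      using r by (intro powr_mono2) auto
    moreover have "(2 powr (- 1 / real_of_int q)) powr (real (Suc n)) = 1/2"
    proof -
      have "(- 1 / real_of_int q) * real (Suc n) = -1" using n by simp
      hence "(2 powr (- 1 / real_of_int q)) powr (real (Suc n)) = 2 powr (-1)"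
        by (simp only: powr_powr)
      also have "\<dots> = 1/2" by (simp add: powr_minus)
      finally show ?thesis .
    qed
    moreover have "r powr (real (Suc n)) = r ^ Suc n" using r0 by (rule powr_realpow)
    ultimately show ?thesis by simp
  qed
  have lt1: "r ^ Suc n < 1" using r0 r1 by (rule power_Suc_less_one)
  obtain al be where ab: "al < be"
    "\<And>x. (al \<le> x \<and> x \<le> be) \<longleftrightarrow> (\<exists>y. al \<le> y \<and> y \<le> be \<and> (x = w*y \<or> x = w*y+1))"
    using interval_attractor[of w] aw half lt1 by auto
  define P where "P = Pset z al be (Suc n)"
  have PV: "P = convex hull (Vset z al be (Suc n))" unfolding P_def by (rule Pset_hull[OF ab(1)])
  have cP: "compact P" unfolding PV by (rule finite_imp_compact_convex_hull[OF Vset_finite])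
  have nP: "P \<noteq> {}" unfolding PV using Vset_nonempty by simp
  have fP: "P = fmap z ` P \<union> gmap z ` P" unfolding P_def by (rule Pset_fix[OF zw ab(2)])
  have L: "Lambda z = P" by (rule Lambda_eqI[OF z cP nP fP])
  have cvx: "convex P" unfolding PV by simp
  have "polytope P" unfolding PV by (rule polytope_convex_hull[OF Vset_finite])
  thus ?thesis using L cvx filled_convex[OF cvx] by simp
qed


lemma forward_core:
  assumes z: "0 < cmod z" "cmod z < 1"
    and C: "compact C" "convex C" "C \<noteq> {}" "C = fmap z ` C \<union> gmap z ` C"
  defines "r \<equiv> cmod z" and "om \<equiv> z / of_real (cmod z)"
  shows "\<exists>D. \<forall>N. 1 \<le> (\<Sum>k<N. r^Suc k * (if Im (om^Suc k) = 0 then 1 else 0)) + r^Suc N * D"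
proof -
  define c where "c = 1 - z"
  have c0: "c \<noteq> 0" using z by (auto simp: c_def)
  have r0: "r > 0" using z by (simp add: r_def)
  have zr: "z = of_real r * om" using z by (simp add: r_def om_def)
  have om1: "cmod om = 1" using z by (simp add: om_def norm_divide)
  define K where "K = (\<lambda>x. z * x) ` C"
  have KC: "fmap z ` C = K" by (simp add: K_def fmap_def[abs_def])
  have gK: "gmap z ` C = (+) c ` K"
    unfolding K_def c_def image_image by (rule image_cong) (auto simp: gmap_def algebra_simps)
  have cK: "compact K" unfolding K_def
    by (intro compact_continuous_image continuous_intros C)
  have nK: "K \<noteq> {}" using C by (simp add: K_def)
  have cvx: "convex (K \<union> (+) c ` K)" using C KC gK by simp
  define e where "e = c / of_real (cmod c)"
  define n where "n = - \<i> * e"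
  obtain x y where xy: "x \<in> face K n" "y \<in> face K n" "Re ((x - y) * cnj e) \<ge> cmod c"
    using chord[OF cK nK c0 cvx] unfolding e_def n_def by blast
  obtain a where a: "a \<in> C" "x = z * a" using xy(1) by (auto simp: face_def K_def)
  obtain b where b: "b \<in> C" "y = z * b" using xy(2) by (auto simp: face_def K_def)
  define v where "v = n * cnj om"
  have v1: "cmod v = 1" using om1 by (simp add: v_def n_def e_def norm_mult norm_divide c0)
  have inface: "a' \<in> face C v" if "z * a' \<in> face K n" "a' \<in> C" for a'
    unfolding face_def
  proof (intro CollectI conjI ballI)
    show "a' \<in> C" by fact
    fix a'' assume "a'' \<in> C"
    hence "z * a'' \<in> K" unfolding K_def by (rule imageI)
    hence "Re (z * a'' * cnj n) \<le> Re (z * a' * cnj n)" using that(1) by (auto simp: face_def)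
    thus "Re (a'' * cnj v) \<le> Re (a' * cnj v)"
      unfolding v_def re_rot[OF zr om1] using r0 by (simp add: mult_le_cancel_left_pos)
  qed
  have aF: "a \<in> face C v" using inface xy(1) a by simp
  have bF: "b \<in> face C v" using inface xy(2) b by simp
  have ev: "e * cnj om = \<i> * v" by (simp add: v_def n_def algebra_simps)
  have key: "cmod c \<le> r * Re ((a - b) * cnj (\<i> * v))"
  proof -
    have "Re ((x - y) * cnj e) = Re (z * (a - b) * cnj e)" using a b by (simp add: algebra_simps)
    also have "\<dots> = r * Re ((a - b) * cnj (e * cnj om))" by (rule re_rot[OF zr om1])
    finally show ?thesis using xy(3) ev by simp
  qed
  obtain B where B: "\<forall>x\<in>C. norm x \<le> B" using compact_imp_bounded[OF C(1)] bounded_iff by blast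
  define D0 where "D0 = 2 * B"
  have D0: "\<forall>x\<in>C. \<forall>y\<in>C. cmod (x - y) \<le> D0"
    using B norm_triangle_ineq4 unfolding D0_def by (smt (verit))
  have ind: "Re (c * om ^ k * cnj v) = 0 \<longleftrightarrow> Im (om ^ Suc k) = 0" for k
  proof -
    have ce0: "c * cnj e = of_real (cmod c)"
    proof -
      have "c * cnj e = c * cnj c / of_real (cmod c)" by (simp add: e_def)
      also have "\<dots> = of_real (cmod c)" using c0 unfolding complex_norm_square[symmetric]
        by (simp add: power2_eq_square)
      finally show ?thesis .
    qed
    have "c * om ^ k * cnj v = \<i> * of_real (cmod c) * om ^ Suc k"
      using ce0 by (simp add: v_def n_def algebra_simps)
    moreover have "\<And>(a::real) w. Re (\<i> * of_real a * w) = - a * Im w" by simp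
    ultimately have "Re (c * om ^ k * cnj v) = - cmod c * Im (om ^ Suc k)" by metis
    thus ?thesis using c0 by simp
  qed
  show ?thesis
  proof (intro exI allI)
    fix N
    have bnd: "Re ((a - b) * cnj (\<i> * v)) \<le>
      cmod (1 - z) * (\<Sum>k<N. r ^ k * (if Re ((1 - z) * om ^ k * cnj v) = 0 then 1 else 0)) + r ^ N * D0"
      by (rule face_bound[OF zr r0 om1 C(4) D0 v1 aF bF])
    hence "cmod c \<le> r * (cmod c * (\<Sum>k<N. r ^ k * (if Im (om ^ Suc k) = 0 then 1 else 0)) + r ^ N * D0)"
      using key r0 unfolding c_def[symmetric] ind by (smt (verit) mult_left_mono)
    also have "\<dots> = cmod c * ((\<Sum>k<N. r ^ Suc k * (if Im (om ^ Suc k) = 0 then 1 else 0)) + r ^ Suc N * (D0 / cmod c))"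
      using c0 by (simp add: sum_distrib_left algebra_simps)
    finally show "1 \<le> (\<Sum>k<N. r ^ Suc k * (if Im (om ^ Suc k) = 0 then 1 else 0)) + r ^ Suc N * (D0 / cmod c)"
      using c0 by simp
  qed
qed


lemma separate_ray:
  fixes A B C :: "complex set"
  assumes A: "compact A" "convex A" "A \<noteq> {}" and B: "compact B" "convex B"
    and C: "compact C" and xC: "x \<in> C" and xAB: "x \<notin> A \<union> B"
    and fr: "frontier C \<subseteq> A \<union> B"
  shows False
proof -
  obtain a1 b1 where ab1: "inner a1 x < b1" "\<forall>y\<in>A. inner a1 y > b1"
    using separating_hyperplane_closed_point[OF A(2) compact_imp_closed[OF A(1)]] xAB by blast
  obtain a2 b2 where ab2: "inner a2 x < b2" "\<forall>y\<in>B. inner a2 y > b2"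
    using separating_hyperplane_closed_point[OF B(2) compact_imp_closed[OF B(1)]] xAB by blast
  have a10: "a1 \<noteq> 0" using ab1 A(3) by auto
  define d0 where "d0 = \<i> * a1"
  have i0: "inner a1 d0 = 0" by (simp add: d0_def inner_complex_def)
  obtain d where d: "d \<noteq> 0" "inner a1 d \<le> 0" "inner a2 d \<le> 0"
  proof (cases "inner a2 d0 \<le> 0")
    case True
    thus ?thesis using that[of d0] i0 a10 by (simp add: d0_def)
  next
    case False
    thus ?thesis using that[of "- d0"] i0 a10 by (simp add: d0_def inner_minus_right)
  qed
  define R where "R = (\<lambda>t. x + t *\<^sub>R d) ` {0..}"
  have cR: "connected R" unfolding R_def
    by (intro connected_continuous_image continuous_intros) simp
  have "R \<inter> C \<noteq> {}" using xC unfolding R_def by (auto intro!: image_eqI[of _ _ 0])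
  moreover have "R - C \<noteq> {}"
  proof -
    obtain M where M: "\<forall>y\<in>C. norm y \<le> M" using compact_imp_bounded[OF C] bounded_iff by blast
    define t where "t = (\<bar>M\<bar> + norm x + 1) / norm d"
    have t0: "t \<ge> 0" using d by (simp add: t_def)
    have "norm (t *\<^sub>R d) = \<bar>M\<bar> + norm x + 1" using d by (simp add: t_def)
    moreover have "norm (t *\<^sub>R d) - norm x \<le> norm (t *\<^sub>R d + x)" by (rule norm_diff_ineq)
    ultimately have "norm (x + t *\<^sub>R d) \<ge> \<bar>M\<bar> + 1" by (simp add: add.commute)
    hence "x + t *\<^sub>R d \<notin> C" using M by force
    thus ?thesis using t0 unfolding R_def by blast
  qed
  ultimately obtain w where w: "w \<in> R" "w \<in> frontier C"
    using connected_Int_frontier[OF cR] by blast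
  then obtain t where t: "t \<ge> 0" "w = x + t *\<^sub>R d" unfolding R_def by auto
  have "t * inner a1 d \<le> 0" using t(1) d(2) by (rule mult_nonneg_nonpos)
  hence "inner a1 w < b1"
    using ab1(1) t(2) by (simp add: inner_add_right)
  hence "w \<notin> A" using ab1(2) by force
  moreover have "t * inner a2 d \<le> 0" using t(1) d(3) by (rule mult_nonneg_nonpos)
  hence "inner a2 w < b2"
    using ab2(1) t(2) by (simp add: inner_add_right)
  hence "w \<notin> B" using ab2(2) by force
  ultimately show False using w fr by blast
qed

lemma setup_conv:
  assumes z: "0 < cmod z" "cmod z < 1" and cv: "convex (filled (Lambda z))"
  defines "C \<equiv> convex hull (Lambda z)"
  shows "compact C \<and> convex C \<and> C \<noteq> {} \<and> C = fmap z ` C \<union> gmap z ` C"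
proof -
  define L where "L = Lambda z"
  have L: "compact L" "L \<noteq> {}" "L = fmap z ` L \<union> gmap z ` L"
    using Lambda_props[OF z] by (auto simp: L_def)
  have CL: "C = convex hull L" by (simp add: C_def L_def)
  have cC: "compact C" unfolding CL by (rule compact_convex_hull[OF L(1)])
  have vC: "convex C" unfolding CL by simp
  have LC: "L \<subseteq> C" unfolding CL by (rule hull_subset)
  have nC: "C \<noteq> {}" using L(2) LC by blast
  have inC: "inside L \<subseteq> C"
    using outside_subset_convex[OF vC LC] inside_Int_outside[of L] by blast
  have fL: "filled L = C"
  proof
    show "filled L \<subseteq> C" using inC LC by (simp add: filled_inside)
    show "C \<subseteq> filled L" unfolding CL
      by (rule hull_minimal) (use cv in \<open>auto simp: L_def filled_inside\<close>)
  qed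
  have fr: "frontier C \<subseteq> L"
  proof
    fix p assume p: "p \<in> frontier C"
    have pC: "p \<in> C" using p frontier_subset_closed[OF compact_imp_closed[OF cC]] by blast
    show "p \<in> L"
    proof (rule ccontr)
      assume "p \<notin> L"
      hence "p \<in> inside L" using pC fL unfolding filled_inside by blast
      moreover have "inside L \<subseteq> interior C"
        by (rule interior_maximal[OF inC open_inside[OF compact_imp_closed[OF L(1)]]])
      ultimately have "p \<in> interior C" by blast
      thus False using p by (simp add: frontier_def)
    qed
  qed
  have fsub: "fmap z ` C \<subseteq> C"
  proof -
    have "convex hull L \<subseteq> {x. fmap z x \<in> C}"
    proof (rule hull_minimal)
      show "L \<subseteq> {x. fmap z x \<in> C}" using L(3) LC by blast
      show "convex {x. fmap z x \<in> C}"
      proof (rule convexI)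
        fix x y :: complex and u v :: real
        assume "x \<in> {x. fmap z x \<in> C}" "y \<in> {x. fmap z x \<in> C}" "0 \<le> u" "0 \<le> v" "u + v = 1"
        hence "u *\<^sub>R fmap z x + v *\<^sub>R fmap z y \<in> C" using vC by (simp add: convexD)
        moreover have "fmap z (u *\<^sub>R x + v *\<^sub>R y) = u *\<^sub>R fmap z x + v *\<^sub>R fmap z y"
          by (simp add: fmap_def scaleR_conv_of_real algebra_simps)
        ultimately show "u *\<^sub>R x + v *\<^sub>R y \<in> {x. fmap z x \<in> C}" by simp
      qed
    qed
    thus ?thesis using CL by blast
  qed
  have gsub: "gmap z ` C \<subseteq> C"
  proof -
    have "convex hull L \<subseteq> {x. gmap z x \<in> C}"
    proof (rule hull_minimal)
      show "L \<subseteq> {x. gmap z x \<in> C}" using L(3) LC by blast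
      show "convex {x. gmap z x \<in> C}"
      proof (rule convexI)
        fix x y :: complex and u v :: real
        assume "x \<in> {x. gmap z x \<in> C}" "y \<in> {x. gmap z x \<in> C}" "0 \<le> u" "0 \<le> v" and uv: "u + v = 1"
        hence "u *\<^sub>R gmap z x + v *\<^sub>R gmap z y \<in> C" using vC by (simp add: convexD)
        moreover have "gmap z (u *\<^sub>R x + v *\<^sub>R y) = u *\<^sub>R gmap z x + v *\<^sub>R gmap z y"
        proof -
          have h: "complex_of_real u + complex_of_real v = 1" using uv
            by (simp only: of_real_add[symmetric] of_real_1)
          have h': "z * complex_of_real u + z * complex_of_real v = z"
            using h by (simp only: distrib_left[symmetric] mult_1_right)
          show ?thesis by (simp add: gmap_def scaleR_conv_of_real algebra_simps h h')
        qed
        ultimately show "u *\<^sub>R x + v *\<^sub>R y \<in> {x. gmap z x \<in> C}" by simp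
      qed
    qed
    thus ?thesis using CL by blast
  qed
  have contf: "continuous_on S (fmap z)" for S unfolding fmap_def by (intro continuous_intros)
  have contg: "continuous_on S (gmap z)" for S unfolding gmap_def by (intro continuous_intros)
  have sup: "C \<subseteq> fmap z ` C \<union> gmap z ` C"
  proof
    fix x assume xC: "x \<in> C"
    show "x \<in> fmap z ` C \<union> gmap z ` C"
    proof (rule ccontr)
      assume nx: "x \<notin> fmap z ` C \<union> gmap z ` C"
      have A: "compact (fmap z ` C)" by (intro compact_continuous_image contf cC)
      have B: "compact (gmap z ` C)" by (intro compact_continuous_image contg cC)
      have Av: "convex (fmap z ` C)"
      proof -
        have "fmap z = (\<lambda>x. z * x)" by (simp add: fmap_def[abs_def])
        thus ?thesis using vC by (simp add: convex_linear_image[OF bounded_linear.linear[OF bounded_linear_mult_right]])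
      qed
      have Bv: "convex (gmap z ` C)"
      proof -
        have "gmap z ` C = (+) (1 - z) ` ((\<lambda>x. z * x) ` C)"
          unfolding image_image by (rule image_cong) (auto simp: gmap_def algebra_simps)
        thus ?thesis using vC
          by (simp add: convex_translation convex_linear_image[OF bounded_linear.linear[OF bounded_linear_mult_right]])
      qed
      have frAB: "frontier C \<subseteq> fmap z ` C \<union> gmap z ` C"
        using fr L(3) LC by blast
      show False
        by (rule separate_ray[OF A Av _ B Bv cC xC nx frAB]) (use nC in simp)
    qed
  qed
  show ?thesis using cC vC nC sup fsub gsub by blast
qed


lemma lim_contra:
  fixes r A D :: real
  assumes r: "0 < r" "r < 1" and b: "\<And>N. 1 \<le> A + r ^ Suc N * D"
  shows "1 \<le> A"
proof (rule ccontr)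
  assume "\<not> 1 \<le> A"
  hence A: "A < 1" by simp
  show False
  proof (cases "D \<le> 0")
    case True
    have "r ^ Suc 0 * D \<le> 0" using True r by (simp add: mult_nonneg_nonpos)
    thus False using b[of 0] A by simp
  next
    case False
    hence D: "D > 0" by simp
    obtain n where n: "r ^ n < (1 - A) / D" using real_arch_pow_inv[of "(1 - A) / D" r] A D r by auto
    have "r ^ Suc n \<le> r ^ n" using r by (intro power_decreasing) auto
    hence "r ^ Suc n * D < 1 - A" using n D by (simp add: pos_less_divide_eq) (smt (verit) mult_right_mono)
    thus False using b[of n] by simp
  qed
qed

lemma dvd_of_min:
  fixes om :: complex
  assumes om: "cmod om = 1" and q: "q > 0" "Im (om ^ q) = 0"
    and minq: "\<And>j. 0 < j \<Longrightarrow> j < q \<Longrightarrow> Im (om ^ j) \<noteq> 0"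
    and j: "Im (om ^ j) = 0"
  shows "q dvd j"
proof -
  define rho where "rho = Re (om ^ q)"
  have oq: "om ^ q = of_real rho" using q(2) by (simp add: rho_def complex_eq_iff)
  have "cmod (om ^ q) = 1" using om by (simp add: norm_power)
  hence rho0: "rho \<noteq> 0" using oq by auto
  have "om ^ j = om ^ (q * (j div q) + j mod q)" by simp
  also have "\<dots> = of_real (rho ^ (j div q)) * om ^ (j mod q)"
    by (simp only: power_add power_mult oq of_real_power)
  finally have "Im (om ^ j) = rho ^ (j div q) * Im (om ^ (j mod q))" by simp
  hence "Im (om ^ (j mod q)) = 0" using j rho0 by simp
  moreover have "j mod q < q" using q by simp
  ultimately have "j mod q = 0" using minq by (metis neq0_conv)
  thus ?thesis by (simp add: mod_eq_0_iff_dvd)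
qed

lemma sum_identity:
  fixes r :: real and q :: nat
  assumes q: "q > 0"
  shows "(1 - r ^ q) * (\<Sum>k<N. r ^ Suc k * (if q dvd Suc k then 1 else 0)) = r ^ q - r ^ (q * (N div q + 1))"
proof (induction N)
  case 0 then show ?case by simp
next
  case (Suc N)
  define d where "d = N div q"
  have dq: "q * d \<le> N" "N < q * Suc d" using q by (simp_all add: d_def) (metis Suc_mult_cancel1 add.commute div_mult_mod_eq  mod_less_divisor mult.commute nat_add_left_cancel_less mult_Suc_right)
  show ?case
  proof (cases "q dvd Suc N")
    case True
    have e: "Suc N = q * Suc d"
    proof -
      obtain m where m: "Suc N = q * m" using True by auto
      have "q * d < q * m" using dq m by linarith
      moreover have "q * m \<le> q * Suc d" using dq m by simp
      ultimately have "m = Suc d" using q by (metis Suc_leI le_antisym mult_le_cancel1 mult_less_cancel1)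
      thus ?thesis using m by simp
    qed
    have sd: "Suc N div q = Suc d" using e q by simp
    define S where "S M = (\<Sum>k<M. r ^ Suc k * (if q dvd Suc k then 1 else 0))" for M
    have "S (Suc N) = S N + r ^ Suc N" using True by (simp add: S_def)
    hence "(1 - r ^ q) * S (Suc N) = (1 - r ^ q) * S N + (1 - r ^ q) * r ^ Suc N"
      by (simp add: algebra_simps)
    also have "\<dots> = (r ^ q - r ^ (q * (d + 1))) + (1 - r ^ q) * r ^ (q * Suc d)"
      using Suc.IH unfolding S_def d_def[symmetric] e by simp
    finally have "(1 - r ^ q) * (\<Sum>k<Suc N. r ^ Suc k * (if q dvd Suc k then 1 else 0))
        = (r ^ q - r ^ (q * (d + 1))) + (1 - r ^ q) * r ^ (q * Suc d)" unfolding S_def .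
    also have "\<dots> = r ^ q - r ^ (q * (Suc N div q + 1))"
      unfolding sd by (simp add: power_add algebra_simps)
    finally show ?thesis .
  next
    case False
    have "Suc N \<noteq> q * Suc d" using False by (metis dvd_triv_left)
    hence "Suc N < q * Suc d" using dq by simp
    hence sd: "Suc N div q = d" using dq by (intro div_nat_eqI) auto
    show ?thesis using Suc.IH False by (simp add: sd d_def)
  qed
qed

lemma final_arith:
  fixes r D :: real and om :: complex
  assumes r: "0 < r" "r < 1" and om: "cmod om = 1"
    and bound: "\<And>N. 1 \<le> (\<Sum>k<N. r^Suc k * (if Im (om^Suc k) = 0 then 1 else 0)) + r^Suc N * D"
  shows "\<exists>q::nat. q > 0 \<and> Im (om^q) = 0 \<and> (\<forall>j. 0 < j \<and> j < q \<longrightarrow> Im (om^j) \<noteq> 0) \<and> 1/2 \<le> r^q"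
proof (cases "\<exists>j>0. Im (om ^ j) = 0")
  case False
  have "(\<Sum>k<N. r^Suc k * (if Im (om^Suc k) = 0 then 1 else 0)) = 0" for N
    using False by (intro sum.neutral) auto
  hence "1 \<le> (0::real)" using lim_contra[OF r, of 0 D] bound by simp
  thus ?thesis by simp
next
  case True
  define q where "q = (LEAST j. 0 < j \<and> Im (om ^ j) = 0)"
  have q: "0 < q" "Im (om ^ q) = 0" unfolding q_def using LeastI_ex[OF True] by auto
  have minq: "\<And>j. 0 < j \<Longrightarrow> j < q \<Longrightarrow> Im (om ^ j) \<noteq> 0"
    unfolding q_def using not_less_Least by blast
  have ind: "Im (om^Suc k) = 0 \<longleftrightarrow> q dvd Suc k" for k
  proof
    assume "Im (om^Suc k) = 0" thus "q dvd Suc k" using dvd_of_min[OF om q(1) q(2) minq] by blast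
  next
    assume "q dvd Suc k"
    then obtain m where "Suc k = q * m" by auto
    hence "om ^ Suc k = (om ^ q) ^ m" by (simp add: power_mult)
    moreover have "om ^ q = of_real (Re (om ^ q))" using q(2) by (simp add: complex_eq_iff)
    ultimately have "om ^ Suc k = of_real (Re (om ^ q) ^ m)" by simp
    thus "Im (om^Suc k) = 0" by simp
  qed
  have rq: "0 < r ^ q" "r ^ q < 1" using r q(1) by (auto, metis gr0_conv_Suc power_Suc_less_one)
  have "1 \<le> r ^ q / (1 - r ^ q)"
  proof (rule lim_contra[OF r, where D = D])
    fix N
    have "(1 - r ^ q) * (\<Sum>k<N. r ^ Suc k * (if q dvd Suc k then 1 else 0)) \<le> r ^ q"
      unfolding sum_identity[OF q(1)] using r by simp
    hence "(\<Sum>k<N. r ^ Suc k * (if q dvd Suc k then 1 else 0)) \<le> r ^ q / (1 - r ^ q)"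
      using rq by (simp add: le_divide_eq mult.commute)
    thus "1 \<le> r ^ q / (1 - r ^ q) + r ^ Suc N * D" using bound[of N] unfolding ind by simp
  qed
  hence "1/2 \<le> r ^ q" using rq by (simp add: le_divide_eq)
  thus ?thesis using q minq by blast
qed


lemma angle_form:
  fixes z :: complex and q :: nat
  assumes z: "0 < cmod z" "cmod z < 1"
    and q: "q > 0" "Im ((z / of_real (cmod z)) ^ q) = 0"
    and minq: "\<forall>j. 0 < j \<and> j < q \<longrightarrow> Im ((z / of_real (cmod z)) ^ j) \<noteq> 0"
    and rq: "1/2 \<le> cmod z ^ q"
  shows "\<exists>(p::int) (q::int) (r::real). q > 0 \<and> coprime p q \<and> r \<ge> 2 powr (- 1 / real_of_int q) \<and>
              z = complex_of_real r * exp (complex_of_real pi * \<i> * of_int p / of_int q)"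
proof -
  define r where "r = cmod z"
  define om where "om = z / of_real (cmod z)"
  define th where "th = Arg z"
  have z0: "z \<noteq> 0" using z by auto
  have omc: "om = cis th" unfolding om_def th_def using cis_Arg[OF z0] by (simp add: sgn_eq)
  have pw: "Im (om ^ j) = sin (real j * th)" for j unfolding omc by (rule sin_n_Im_cis_pow_n[symmetric])
  obtain m :: int where m: "real q * th = of_int m * pi"
    using q(2) pw[of q] sin_zero_iff_int2 unfolding om_def[symmetric] by auto
  have th_eq: "th = of_int m * pi / real q" using m q by (simp add: field_simps)
  have cop: "coprime m (int q)"
  proof (rule ccontr)
    assume nc: "\<not> coprime m (int q)"
    define g where "g = gcd m (int q)"
    have g0: "g > 0" using q by (simp add: g_def)
    have g1: "g \<noteq> 1" using nc by (simp add: g_def coprime_iff_gcd_eq_1)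
    have gq: "g dvd int q" and gm: "g dvd m" by (simp_all add: g_def)
    obtain j0 where j0: "int q = g * j0" using gq by blast
    obtain m0 where m0: "m = g * m0" using gm by blast
    have "0 < g * j0" using j0 q by simp
    hence j0pos: "j0 > 0" using g0 by (simp add: zero_less_mult_iff)
    have g2: "g \<ge> 2" using g0 g1 by simp
    define j where "j = nat j0"
    have jq: "int j = j0" using j0pos by (simp add: j_def)
    have "int j < int q" using j0 jq j0pos g2 by (simp add: mult_less_cancel_right1)
    hence jlt: "j < q" by simp
    have jpos: "j > 0" using jq j0pos by simp
    have "real j * th = of_int m0 * pi"
    proof -
      have "real q = of_int g * real j" using j0 jq by (metis of_int_mult of_int_of_nat_eq)
      moreover have "of_int m = of_int g * (of_int m0 :: real)" using m0 by simp
      ultimately show ?thesis unfolding th_eq using g0 jpos by (simp add: field_simps)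
    qed
    hence "Im (om ^ j) = 0" using pw[of j] sin_zero_iff_int2 by auto
    thus False using minq jpos jlt unfolding om_def by blast
  qed
  have zr: "z = of_real r * om" using z0 by (simp add: r_def om_def)
  have omexp: "om = exp (complex_of_real pi * \<i> * of_int m / of_int (int q))"
  proof -
    have "complex_of_real pi * \<i> * of_int m / of_int (int q) = \<i> * of_real th"
      unfolding th_eq by simp
    thus ?thesis unfolding omc cis_conv_exp by simp
  qed
  have r0: "r > 0" using z by (simp add: r_def)
  have rb: "r \<ge> 2 powr (- 1 / real_of_int (int q))"
  proof -
    have "(1/2) powr (1 / real q) \<le> (r ^ q) powr (1 / real q)"
      using rq by (intro powr_mono2) (auto simp: r_def)
    moreover have "(r ^ q) powr (1 / real q) = r"
    proof -
      have "r ^ q = r powr (real q)" using r0 by (simp add: powr_realpow)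
      hence "(r ^ q) powr (1 / real q) = r powr (real q * (1 / real q))" by (simp add: powr_powr)
      thus ?thesis using q r0 by simp
    qed
    moreover have "(1/2) powr (1 / real q) = 2 powr (- 1 / real_of_int (int q))"
      by (simp add: powr_divide powr_minus_divide)
    ultimately show ?thesis by simp
  qed
  show ?thesis
    using q(1) cop rb zr omexp by (intro exI[of _ m] exI[of _ "int q"] exI[of _ r]) auto
qed

theorem lemma7p2p3:
  fixes z :: complex
  assumes "z \<in> Mset"
  shows "(convex (filled (Lambda z)) \<longleftrightarrow>
           (\<exists>(p::int) (q::int) (r::real). q > 0 \<and> coprime p q \<and> r \<ge> 2 powr (- 1 / real_of_int q) \<and>
              z = complex_of_real r * exp (complex_of_real pi * \<i> * of_int p / of_int q)))
       \<and> (convex (filled (Lambda z)) \<longrightarrow>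
           filled (Lambda z) = Lambda z \<and> polytope (Lambda z))"
proof -
  have z: "0 < cmod z" "cmod z < 1" using assms by (auto simp: Mset_def)
  have fwd: "\<exists>(p::int) (q::int) (r::real). q > 0 \<and> coprime p q \<and> r \<ge> 2 powr (- 1 / real_of_int q) \<and>
              z = complex_of_real r * exp (complex_of_real pi * \<i> * of_int p / of_int q)"
    if cv: "convex (filled (Lambda z))"
  proof -
    define C where "C = convex hull (Lambda z)"
    have C: "compact C" "convex C" "C \<noteq> {}" "C = fmap z ` C \<union> gmap z ` C"
      using setup_conv[OF z cv] unfolding C_def by auto
    obtain D where D: "\<forall>N. 1 \<le> (\<Sum>k<N. cmod z ^ Suc k * (if Im ((z / of_real (cmod z)) ^ Suc k) = 0 then 1 else 0))
        + cmod z ^ Suc N * D"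
      using forward_core[OF z C] by blast
    have om1: "cmod (z / of_real (cmod z)) = 1" using z by (simp add: norm_divide)
    obtain q :: nat where q: "q > 0" "Im ((z / of_real (cmod z)) ^ q) = 0"
      "\<forall>j. 0 < j \<and> j < q \<longrightarrow> Im ((z / of_real (cmod z)) ^ j) \<noteq> 0" "1/2 \<le> cmod z ^ q"
      using final_arith[OF z om1, of D] D by blast
    show ?thesis by (rule angle_form[OF z q])
  qed
  have bwd: "convex (filled (Lambda z)) \<and> filled (Lambda z) = Lambda z \<and> polytope (Lambda z)"
    if "\<exists>(p::int) (q::int) (r::real). q > 0 \<and> coprime p q \<and> r \<ge> 2 powr (- 1 / real_of_int q) \<and>
              z = complex_of_real r * exp (complex_of_real pi * \<i> * of_int p / of_int q)"
    using that reverse_dir[OF z] by blast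
  show ?thesis using fwd bwd by blast
qed


end
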